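(* Suppose $w$ induces the triangulation $Z$ and let $a>0$ be a constant as in the following fact: for all sufficiently small $\delta$ and all $x\in P_\Sigma$, $\{m\in A:\rho_m(x)>\delta^a\}$ is the vertex set of a simplex of $Z$. Then for all sufficiently small $\delta>0$ and every $\epsilon$ with $\delta^a\le\epsilon<1/|\Delta|$, $$P_\Sigma=\bigcup_{S\in Z}U^S_\epsilon .$$
   Context: Let $M\cong\mathbb{Z}^2$, $\Delta\subset M_{\mathbb{R}}$ a 2-dimensional lattice polygon, $A=\Delta\cap M$, $|\Delta|$ the number of points of $A$, $P_\Sigma$ the projective toric surface of the normal fan of $\Delta$ with torus $(\mathbb{C}^* )^2$, $s_m(x)=x^m$. For $w\in\mathbb{Z}^A$, $\delta\in(0,1)$: $\rho_m=\delta^{2w_m}|s_m|^2/\sum_{m'\in A}\delta^{2w_{m'}}|s_{m'}|^2$, $\rho_S=\sum_{m\in S}\rho_m$. We say $w$ induces the triangulation $Z$ if $Z$ is a triangulation of $\Delta$ with vertex set $A$, triangles containing no other lattice points, such that for every simplex $\sigma$ of $Z$ there is an affine $\ell_\sigma$ with $w_m=\ell_\sigma(m)$ on vertices of $\sigma$ and $w_m>\ell_\sigma(m)$ for other $m\in A$; simplices (of all dimensions) are identified with their vertex sets $S$. For $S\in Z$: $U^S_\epsilon=\{x\in P_\Sigma:\rho_S(x)>1-|\Delta|\epsilon,\ \rho_m(x)>\epsilon\ \text{for all } m\in S\}$. *)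

theory Defs
  imports "HOL-Analysis.Analysis"
begin

definition rpt :: "int \<times> int \<Rightarrow> real \<times> real" where
  "rpt m = (of_int (fst m), of_int (snd m))"

definition polygon :: "(int \<times> int) set \<Rightarrow> (real \<times> real) set" where
  "polygon V = convex hull (rpt ` V)"

definition lattice_points :: "(real \<times> real) set \<Rightarrow> (int \<times> int) set" where
  "lattice_points D = {m. rpt m \<in> D}"

definition monomial :: "complex \<times> complex \<Rightarrow> int \<times> int \<Rightarrow> complex" where
  "monomial x m = fst x powi fst m * snd x powi snd m"

text \<open>The projective toric surface P_Sigma, realised as the closure of the image of the
  torus under x \<mapsto> [x^m]_{m in A} in projective space. A point is represented by a
  nonzero homogeneous coordinate vector z (supported on A) lying in the closure of the
  affine cone over the torus image.\<close>
definition toric_surface :: "(int \<times> int) set \<Rightarrow> ((int \<times> int) \<Rightarrow> complex) set" where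
  "toric_surface A = {z. (\<forall>m. m \<notin> A \<longrightarrow> z m = 0) \<and> (\<exists>m\<in>A. z m \<noteq> 0) \<and>
     (\<exists>lam :: nat \<Rightarrow> complex. \<exists>t :: nat \<Rightarrow> complex \<times> complex.
        (\<forall>k. lam k \<noteq> 0 \<and> fst (t k) \<noteq> 0 \<and> snd (t k) \<noteq> 0) \<and>
        (\<forall>m\<in>A. (\<lambda>k. lam k * monomial (t k) m) \<longlonglongrightarrow> z m))}"

definition rho :: "real \<Rightarrow> (int \<times> int \<Rightarrow> int) \<Rightarrow> (int \<times> int) set \<Rightarrow> int \<times> int
                    \<Rightarrow> (int \<times> int \<Rightarrow> complex) \<Rightarrow> real" where
  "rho \<delta> w A m z = \<delta> powi (2 * w m) * (cmod (z m))\<^sup>2 /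
       (\<Sum>m'\<in>A. \<delta> powi (2 * w m') * (cmod (z m'))\<^sup>2)"

definition rhoS :: "real \<Rightarrow> (int \<times> int \<Rightarrow> int) \<Rightarrow> (int \<times> int) set \<Rightarrow> (int \<times> int) set
                    \<Rightarrow> (int \<times> int \<Rightarrow> complex) \<Rightarrow> real" where
  "rhoS \<delta> w A S z = (\<Sum>m\<in>S. rho \<delta> w A m z)"

definition U_set :: "real \<Rightarrow> (int \<times> int \<Rightarrow> int) \<Rightarrow> (int \<times> int) set \<Rightarrow> (int \<times> int) set
                    \<Rightarrow> real \<Rightarrow> (int \<times> int \<Rightarrow> complex) set" where
  "U_set \<delta> w A S \<epsilon> = {z \<in> toric_surface A. rhoS \<delta> w A S z > 1 - real (card A) * \<epsilon> \<and>
       (\<forall>m\<in>S. rho \<delta> w A m z > \<epsilon>)}"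

text \<open>Simplices of all dimensions are identified
  with their (nonempty) vertex sets.\<close>
definition is_lattice_triangulation :: "(real \<times> real) set \<Rightarrow> (int \<times> int) set set \<Rightarrow> bool" where
  "is_lattice_triangulation D Z \<longleftrightarrow>
     finite Z \<and>
     (\<forall>S\<in>Z. S \<noteq> {} \<and> finite S \<and> \<not> affine_dependent (rpt ` S)) \<and>
     (\<forall>S\<in>Z. \<forall>T. T \<subseteq> S \<and> T \<noteq> {} \<longrightarrow> T \<in> Z) \<and>
     (\<forall>S\<in>Z. \<forall>T\<in>Z. convex hull (rpt ` S) \<inter> convex hull (rpt ` T) = convex hull (rpt ` (S \<inter> T))) \<and>
     (\<Union>S\<in>Z. convex hull (rpt ` S)) = D \<and>
     \<Union>Z = lattice_points D \<and>
     (\<forall>S\<in>Z. card S = 3 \<longrightarrow> lattice_points (convex hull (rpt ` S)) = S)"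

definition induces_triangulation :: "(real \<times> real) set \<Rightarrow> (int \<times> int \<Rightarrow> int) \<Rightarrow> (int \<times> int) set set \<Rightarrow> bool" where
  "induces_triangulation D w Z \<longleftrightarrow> is_lattice_triangulation D Z \<and>
     (\<forall>S\<in>Z. \<exists>c0 c1 c2 :: real.
        (\<forall>m\<in>S. real_of_int (w m) = c0 + c1 * fst (rpt m) + c2 * snd (rpt m)) \<and>
        (\<forall>m\<in>lattice_points D - S. real_of_int (w m) > c0 + c1 * fst (rpt m) + c2 * snd (rpt m)))"

end

theory Submission
  imports Defs
begin

lemma rho_sum_one:
  assumes "finite A" "z \<in> toric_surface A" "\<delta> > 0"
  shows "(\<Sum>m\<in>A. rho \<delta> w A m z) = 1"
proof -
  define f where "f = (\<lambda>m'. \<delta> powi (2 * w m') * (cmod (z m'))\<^sup>2)"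
  from assms(2) obtain m0 where m0: "m0 \<in> A" "z m0 \<noteq> 0" unfolding toric_surface_def by blast
  have "f m0 > 0" unfolding f_def
    by (intro mult_pos_pos zero_less_power_int assms(3)) (use m0 in simp)
  moreover have "\<And>m. m \<in> A \<Longrightarrow> f m \<ge> 0" unfolding f_def
    by (intro mult_nonneg_nonneg less_imp_le[OF zero_less_power_int] assms(3) zero_le_power2)
  ultimately have pos: "sum f A > 0"
    by (rule sum_pos2[OF assms(1) m0(1)])
  have "(\<Sum>m\<in>A. rho \<delta> w A m z) = (\<Sum>m\<in>A. f m / sum f A)"
    unfolding rho_def f_def by (rule refl)
  also have "\<dots> = sum f A / sum f A" by (rule sum_divide_distrib[symmetric])
  also have "\<dots> = 1" using pos by simp
  finally show ?thesis .
qed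

theorem proposition3p3:
  fixes V :: "(int \<times> int) set" and w :: "int \<times> int \<Rightarrow> int"
    and Z :: "(int \<times> int) set set" and a :: real
    and \<Delta> :: "(real \<times> real) set" and A :: "(int \<times> int) set"
  assumes "finite V" and "\<Delta> = polygon V" and "interior \<Delta> \<noteq> {}"
    and "A = lattice_points \<Delta>"
    and "induces_triangulation \<Delta> w Z"
    and "a > 0"
    and "\<exists>\<delta>0>0. \<forall>\<delta>. 0 < \<delta> \<and> \<delta> < \<delta>0 \<longrightarrow>
           (\<forall>z\<in>toric_surface A. {m\<in>A. rho \<delta> w A m z > \<delta> powr a} \<in> Z)"
  shows "\<exists>\<delta>1>0. \<forall>\<delta>. 0 < \<delta> \<and> \<delta> < \<delta>1 \<longrightarrow>
           (\<forall>\<epsilon>. \<delta> powr a \<le> \<epsilon> \<and> \<epsilon> < 1 / real (card A) \<longrightarrow>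
              toric_surface A = (\<Union>S\<in>Z. U_set \<delta> w A S \<epsilon>))"
proof -
  obtain \<delta>0 where d0: "\<delta>0 > 0" and H: "\<And>\<delta> z. 0 < \<delta> \<Longrightarrow> \<delta> < \<delta>0 \<Longrightarrow> z \<in> toric_surface A \<Longrightarrow>
      {m\<in>A. rho \<delta> w A m z > \<delta> powr a} \<in> Z" using assms(7) by blast
  have tri: "is_lattice_triangulation \<Delta> Z" using assms(5) unfolding induces_triangulation_def by (rule conjunct1)
  have lt1: "finite Z" using tri unfolding is_lattice_triangulation_def by (elim conjE) assumption
  have lt2: "\<forall>S\<in>Z. S \<noteq> {} \<and> finite S \<and> \<not> affine_dependent (rpt ` S)"
    using tri unfolding is_lattice_triangulation_def by (elim conjE) assumption
  have lt3: "\<forall>S\<in>Z. \<forall>T. T \<subseteq> S \<and> T \<noteq> {} \<longrightarrow> T \<in> Z"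
    using tri unfolding is_lattice_triangulation_def by (elim conjE) assumption
  have lt4: "\<Union>Z = lattice_points \<Delta>"
    using tri unfolding is_lattice_triangulation_def by (elim conjE) assumption
  note lt = lt1 lt2 lt3 lt4
  have finA: "finite A"
  proof -
    have "A = \<Union>Z" using lt(4) assms(4) by simp
    moreover have "\<forall>S\<in>Z. finite S" using lt(2) by simp
    ultimately show ?thesis using finite_Union lt(1) by metis
  qed
  have subZ: "\<And>S T. S \<in> Z \<Longrightarrow> T \<subseteq> S \<Longrightarrow> T \<noteq> {} \<Longrightarrow> T \<in> Z"
    using lt(3) by simp
  show ?thesis
  proof (intro exI[of _ \<delta>0] conjI allI impI d0)
    fix \<delta> \<epsilon> assume d: "0 < \<delta> \<and> \<delta> < \<delta>0" and e: "\<delta> powr a \<le> \<epsilon> \<and> \<epsilon> < 1 / real (card A)"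
    have "\<delta> powr a > 0" using d by simp
    then have epos: "\<epsilon> > 0" using e by linarith
    show "toric_surface A = (\<Union>S\<in>Z. U_set \<delta> w A S \<epsilon>)"
    proof
      show "(\<Union>S\<in>Z. U_set \<delta> w A S \<epsilon>) \<subseteq> toric_surface A" unfolding U_set_def by auto
    next
      show "toric_surface A \<subseteq> (\<Union>S\<in>Z. U_set \<delta> w A S \<epsilon>)"
      proof
        fix z assume z: "z \<in> toric_surface A"
        let ?r = "\<lambda>m. rho \<delta> w A m z"
        define S where "S = {m\<in>A. ?r m > \<delta> powr a}"
        define S' where "S' = {m\<in>A. ?r m > \<epsilon>}"
        have SZ: "S \<in> Z" unfolding S_def using H d z by blast
        have sub: "S' \<subseteq> S" unfolding S_def S'_def using e by auto
        have sum1: "(\<Sum>m\<in>A. ?r m) = 1" using rho_sum_one[OF finA z] d by blast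
        have cA: "card A > 0"
        proof (rule ccontr)
          assume "\<not> card A > 0" then have "card A = 0" by simp
          then show False using e epos by simp
        qed
        have ne: "S' \<noteq> {}"
        proof
          assume emp: "S' = {}"
          then have "\<forall>m\<in>A. ?r m \<le> \<epsilon>" unfolding S'_def by (auto simp del: split_paired_All simp add: not_less)
          then have "(\<Sum>m\<in>A. ?r m) \<le> real (card A) * \<epsilon>"
            using sum_bounded_above[of A ?r \<epsilon>] by simp
          moreover have "real (card A) * \<epsilon> < 1" using e cA by (simp add: field_simps)
          ultimately show False using sum1 by simp
        qed
        have S'Z: "S' \<in> Z" using subZ[OF SZ sub ne] .
        have S'A: "S' \<subseteq> A" unfolding S'_def by auto
        have finS': "finite S'" using finite_subset[OF S'A finA] .
        have "(\<Sum>m\<in>A. ?r m) = (\<Sum>m\<in>S'. ?r m) + (\<Sum>m\<in>A - S'. ?r m)"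
          using sum.subset_diff[OF S'A finA] by (simp add: add.commute)
        moreover have "(\<Sum>m\<in>A - S'. ?r m) \<le> real (card (A - S')) * \<epsilon>"
          proof -
          have "\<forall>m\<in>A - S'. ?r m \<le> \<epsilon>" unfolding S'_def by auto
          then show ?thesis using sum_bounded_above[of "A - S'" ?r \<epsilon>] by simp
        qed
        moreover have "card (A - S') < card A"
        proof -
          have "card (A - S') = card A - card S'" using card_Diff_subset[OF finS' S'A] .
          moreover have "card S' > 0" using ne finS' by (simp add: card_gt_0_iff)
          moreover have "card S' \<le> card A" using card_mono[OF finA S'A] .
          ultimately show ?thesis using cA by linarith
        qed
        then have "real (card (A - S')) * \<epsilon> < real (card A) * \<epsilon>" using epos by simp
        ultimately have "rhoS \<delta> w A S' z > 1 - real (card A) * \<epsilon>"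
          unfolding rhoS_def using sum1 by linarith
        moreover have "\<forall>m\<in>S'. ?r m > \<epsilon>" unfolding S'_def by auto
        ultimately have "z \<in> U_set \<delta> w A S' \<epsilon>" unfolding U_set_def using z by blast
        then show "z \<in> (\<Union>S\<in>Z. U_set \<delta> w A S \<epsilon>)" using S'Z by blast
      qed
    qed
  qed
qed

end
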